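(* Let $k$ be a field of characteristic $\neq 2$ and let $\mathcal O=v_0k[t]\oplus v_1k[t]\oplus v_2k[t]$ be the Lie algebra described in the context. Then: (i) $\mathcal O$ is generated, as a Lie algebra over $k$, by $v_0,v_1,v_2$; (ii) the centroid of $\mathcal O$ is isomorphic to $k[t]$ (every element of the centroid is the multiplication by some polynomial $p(t)\in k[t]$); (iii) $\mathcal O$ is prime.
   Context: $\mathcal O$ is the Lie algebra over $k$ which is a free $k[t]$-module with basis $v_0,v_1,v_2$, whose bracket is $k[t]$-bilinear and determined by $[v_0,v_1]=-v_2(t-1)$, $[v_1,v_2]=-v_0$, $[v_2,v_0]=v_1t$. (Concretely, in $\mathfrak{sl}_2(k)\otimes k[t,t^{-1},(1-t)^{-1}]$ it is the subalgebra $u_0(t-1)k[t]\oplus u_1k[t]\oplus u_2tk[t]$ with $v_0=u_0(t-1)$, $v_1=u_1$, $v_2=u_2t$, and it is isomorphic to the Onsager algebra, the Lie algebra with generators $A,B$ and relations $[A,[A,[A,B]]]=4[A,B]$, $[B,[B,[B,A]]]=4[B,A]$.) The centroid of a Lie algebra $L$ over $k$ is $\{f\in\mathrm{End}_k(L): f([x,y])=[x,f(y)]\ \forall x,y\in L\}$. A Lie algebra is prime if the bracket of two nonzero ideals is never zero. *)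

theory Defs
  imports "HOL-Computational_Algebra.Polynomial"
begin

text \<open>Elements of the Onsager algebra O = v0 k[t] + v1 k[t] + v2 k[t] are represented
by their coordinate triples (p0, p1, p2) with respect to the k[t]-basis v0, v1, v2.\<close>

type_synonym 'a ons = "'a poly \<times> 'a poly \<times> 'a poly"

definition ons_v0 :: "'a::field ons" where "ons_v0 = (1, 0, 0)"
definition ons_v1 :: "'a::field ons" where "ons_v1 = (0, 1, 0)"
definition ons_v2 :: "'a::field ons" where "ons_v2 = (0, 0, 1)"

definition ons_zero :: "'a::field ons" where "ons_zero = (0, 0, 0)"

definition ons_add :: "'a::field ons \<Rightarrow> 'a ons \<Rightarrow> 'a ons" where
  "ons_add x y = (case x of (a0, a1, a2) \<Rightarrow> case y of (b0, b1, b2) \<Rightarrow> (a0 + b0, a1 + b1, a2 + b2))"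

definition ons_smult :: "'a::field \<Rightarrow> 'a ons \<Rightarrow> 'a ons" where
  "ons_smult c x = (case x of (a0, a1, a2) \<Rightarrow> (smult c a0, smult c a1, smult c a2))"

definition ons_pmult :: "'a::field poly \<Rightarrow> 'a ons \<Rightarrow> 'a ons" where
  "ons_pmult p x = (case x of (a0, a1, a2) \<Rightarrow> (p * a0, p * a1, p * a2))"

text \<open>The k[t]-bilinear bracket determined by
  [v0,v1] = -v2 (t-1), [v1,v2] = -v0, [v2,v0] = v1 t.\<close>
definition ons_br :: "'a::field ons \<Rightarrow> 'a ons \<Rightarrow> 'a ons" where
  "ons_br x y = (case x of (a0, a1, a2) \<Rightarrow> case y of (b0, b1, b2) \<Rightarrow>
     (a2 * b1 - a1 * b2,
      [:0, 1:] * (a2 * b0 - a0 * b2),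
      - ([:-1, 1:] * (a0 * b1 - a1 * b0))))"

inductive_set ons_lie_gen :: "'a::field ons set \<Rightarrow> 'a ons set" for S where
  base: "x \<in> S \<Longrightarrow> x \<in> ons_lie_gen S"
| zero: "ons_zero \<in> ons_lie_gen S"
| add: "x \<in> ons_lie_gen S \<Longrightarrow> y \<in> ons_lie_gen S \<Longrightarrow> ons_add x y \<in> ons_lie_gen S"
| smult: "x \<in> ons_lie_gen S \<Longrightarrow> ons_smult c x \<in> ons_lie_gen S"
| br: "x \<in> ons_lie_gen S \<Longrightarrow> y \<in> ons_lie_gen S \<Longrightarrow> ons_br x y \<in> ons_lie_gen S"

inductive_set ons_kspan :: "'a::field ons set \<Rightarrow> 'a ons set" for S where
  base: "x \<in> S \<Longrightarrow> x \<in> ons_kspan S"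
| zero: "ons_zero \<in> ons_kspan S"
| add: "x \<in> ons_kspan S \<Longrightarrow> y \<in> ons_kspan S \<Longrightarrow> ons_add x y \<in> ons_kspan S"
| smult: "x \<in> ons_kspan S \<Longrightarrow> ons_smult c x \<in> ons_kspan S"

definition ons_klinear :: "('a::field ons \<Rightarrow> 'a ons) \<Rightarrow> bool" where
  "ons_klinear f \<longleftrightarrow> (\<forall>x y. f (ons_add x y) = ons_add (f x) (f y)) \<and>
                      (\<forall>c x. f (ons_smult c x) = ons_smult c (f x))"

definition ons_centroid :: "('a::field ons \<Rightarrow> 'a ons) set" where
  "ons_centroid = {f. ons_klinear f \<and> (\<forall>x y. f (ons_br x y) = ons_br x (f y))}"

definition ons_ideal :: "'a::field ons set \<Rightarrow> bool" where
  "ons_ideal I \<longleftrightarrow> ons_zero \<in> I \<and> (\<forall>x\<in>I. \<forall>y\<in>I. ons_add x y \<in> I) \<and>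
     (\<forall>c. \<forall>x\<in>I. ons_smult c x \<in> I) \<and> (\<forall>x y. y \<in> I \<longrightarrow> ons_br x y \<in> I)"

definition ons_ideal_br :: "'a::field ons set \<Rightarrow> 'a ons set \<Rightarrow> 'a ons set" where
  "ons_ideal_br I J = ons_kspan {ons_br x y | x y. x \<in> I \<and> y \<in> J}"

definition ons_prime :: "'a::field itself \<Rightarrow> bool" where
  "ons_prime _ \<longleftrightarrow> (\<forall>I J :: 'a ons set. ons_ideal I \<longrightarrow> ons_ideal J \<longrightarrow>
      I \<noteq> {ons_zero} \<longrightarrow> J \<noteq> {ons_zero} \<longrightarrow> ons_ideal_br I J \<noteq> {ons_zero})"

end

theory Submission
  imports Defs
begin

abbreviation LL :: "'a::field ons set" where "LL \<equiv> ons_lie_gen {ons_v0, ons_v1, ons_v2}"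

lemma L_v: "ons_v0 \<in> LL" "ons_v1 \<in> LL" "ons_v2 \<in> LL"
  by (auto intro: ons_lie_gen.base)

lemma L_sub: "x \<in> LL \<Longrightarrow> y \<in> LL \<Longrightarrow> ons_add x (ons_smult (-1) y) \<in> LL"
  by (intro ons_lie_gen.add ons_lie_gen.smult)

definition PP :: "'a::field poly \<Rightarrow> bool" where
  "PP p \<longleftrightarrow> (p,0,0) \<in> LL \<and> (0,p,0) \<in> LL \<and> (0,0,p) \<in> LL"

lemma PP_const: "PP [:c:]"
proof -
  have "ons_smult c ons_v0 = ([:c:],0,0)" "ons_smult c ons_v1 = (0,[:c:],0)"
       "ons_smult c ons_v2 = (0,0,[:c:])"
    by (simp_all add: ons_smult_def ons_v0_def ons_v1_def ons_v2_def)
  then show ?thesis unfolding PP_def using L_v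
    by (metis ons_lie_gen.smult)
qed

lemma PP_add: "PP p \<Longrightarrow> PP q \<Longrightarrow> PP (p + q)"
proof -
  assume a: "PP p" "PP q"
  have "ons_add (p,0,0) (q,0,0) = (p+q,0,0)" "ons_add (0,p,0) (0,q,0) = (0,p+q,0)"
       "ons_add (0,0,p) (0,0,q) = (0,0,p+q)" by (simp_all add: ons_add_def)
  then show ?thesis using a unfolding PP_def by (metis ons_lie_gen.add)
qed

lemma PP_t: "PP p \<Longrightarrow> PP ([:0,1:] * p)"
proof -
  assume a: "PP p"
  have e1: "ons_br ons_v2 (p,0,0) = (0, [:0,1:] * p, 0)"
    by (simp add: ons_br_def ons_v2_def)
  have e2: "ons_add (0,0,p) (ons_smult (-1) (ons_br ons_v0 (0,p,0))) = (0,0,[:0,1:]*p)"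
    by (simp add: ons_br_def ons_v0_def ons_add_def ons_smult_def algebra_simps)
  have e3: "ons_smult (-1) (ons_br ons_v1 (0,0,[:0,1:]*p)) = ([:0,1:]*p,0,0)"
    by (simp add: ons_br_def ons_v1_def ons_smult_def)
  have 1: "(0, [:0,1:] * p, 0) \<in> LL" using a L_v e1 unfolding PP_def by (metis ons_lie_gen.br)
  have 2: "(0,0,[:0,1:]*p) \<in> LL" using a L_v e2 unfolding PP_def
    by (metis ons_lie_gen.br L_sub)
  have 3: "([:0,1:]*p,0,0) \<in> LL" using 2 L_v e3 by (metis ons_lie_gen.br ons_lie_gen.smult)
  show ?thesis using 1 2 3 unfolding PP_def by blast
qed

lemma PP_all: "PP (p::'a::field poly)"
proof (induction p)
  case 0
  then show ?case using PP_const[of 0] by simp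
next
  case (pCons a p)
  have "pCons a p = [:a:] + [:0,1:] * p" by simp
  then show ?case using PP_add PP_const PP_t pCons by metis
qed

lemma gen_all: "LL = (UNIV :: 'a::field ons set)"
proof -
  { fix p0 p1 p2 :: "'a poly"
    have "(p0,p1,p2) = ons_add (p0,0,0) (ons_add (0,p1,0) (0,0,p2))"
      by (simp add: ons_add_def)
    then have "(p0,p1,p2) \<in> LL" using PP_all unfolding PP_def by (metis ons_lie_gen.add) }
  then show ?thesis by auto
qed

lemma smult_zero_ons: "ons_smult 0 x = ons_zero"
  by (cases x) (simp add: ons_smult_def ons_zero_def)

lemma br_self: "ons_br x x = ons_zero"
  by (cases x) (simp add: ons_br_def ons_zero_def algebra_simps)

lemma br_anti: "ons_br x y = ons_smult (-1) (ons_br y x)"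
  by (cases x; cases y) (simp add: ons_br_def ons_smult_def algebra_simps)

lemma br_pmult: "ons_br x (ons_pmult p y) = ons_pmult p (ons_br x y)"
  by (cases x; cases y) (simp add: ons_br_def ons_pmult_def algebra_simps)

lemma pmult_add: "ons_pmult p (ons_add x y) = ons_add (ons_pmult p x) (ons_pmult p y)"
  by (cases x; cases y) (simp add: ons_add_def ons_pmult_def algebra_simps)

lemma pmult_smult: "ons_pmult p (ons_smult c x) = ons_smult c (ons_pmult p x)"
  by (cases x) (simp add: ons_smult_def ons_pmult_def algebra_simps)

lemma pmult_cent: "ons_pmult p \<in> ons_centroid"
  unfolding ons_centroid_def ons_klinear_def
  by (simp add: br_pmult pmult_add pmult_smult)

lemma cent_is_pmult:
  assumes f: "f \<in> ons_centroid"
  shows "\<exists>p. f = ons_pmult (p::'a::field poly)"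
proof -
  have fadd: "\<And>x y. f (ons_add x y) = ons_add (f x) (f y)"
   and sm: "\<And>c x. f (ons_smult c x) = ons_smult c (f x)"
   and fbr: "\<And>x y. f (ons_br x y) = ons_br x (f y)"
    using f unfolding ons_centroid_def ons_klinear_def by auto
  have f0: "f ons_zero = ons_zero"
    using sm[of 0 ons_zero] by (simp add: smult_zero_ons)
  have z: "\<And>x. ons_br x (f x) = ons_zero" using fbr br_self f0 by metis
  obtain a0 b0 c0 where F0: "f ons_v0 = (a0,b0,c0)" by (cases "f ons_v0") auto
  obtain a1 b1 c1 where F1: "f ons_v1 = (a1,b1,c1)" by (cases "f ons_v1") auto
  obtain a2 b2 c2 where F2: "f ons_v2 = (a2,b2,c2)" by (cases "f ons_v2") auto
  have "b0 = 0 \<and> c0 = 0" using z[of ons_v0] F0 by (simp add: ons_br_def ons_v0_def ons_zero_def del: mult_pCons_left mult_pCons_right)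
  moreover have "a1 = 0 \<and> c1 = 0" using z[of ons_v1] F1 by (simp add: ons_br_def ons_v1_def ons_zero_def del: mult_pCons_left mult_pCons_right)
  moreover have "a2 = 0 \<and> b2 = 0" using z[of ons_v2] F2 by (simp add: ons_br_def ons_v2_def ons_zero_def del: mult_pCons_left mult_pCons_right)
  ultimately have G0: "f ons_v0 = (a0,0,0)" and G1: "f ons_v1 = (0,b1,0)" and G2: "f ons_v2 = (0,0,c2)"
    using F0 F1 F2 by auto
  have "ons_v0 = ons_smult (-1) (ons_br ons_v1 ons_v2)"
    by (simp add: ons_br_def ons_v0_def ons_v1_def ons_v2_def ons_smult_def)
  then have "f ons_v0 = ons_smult (-1) (ons_br ons_v1 (f ons_v2))" using sm fbr by metis
  then have "a0 = c2" using G0 G2 by (simp add: ons_br_def ons_v1_def ons_smult_def)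
  have "f (ons_br ons_v0 ons_v1) = ons_br ons_v0 (f ons_v1)" using fbr by metis
  moreover have "f (ons_br ons_v0 ons_v1) = ons_smult (-1) (ons_br ons_v1 (f ons_v0))"
    using fbr br_anti sm by metis
  ultimately have "ons_br ons_v0 (0,b1,0) = ons_smult (-1) (ons_br ons_v1 (a0,0,0))"
    using G0 G1 by simp
  then have "a0 = b1" by (simp add: ons_br_def ons_v1_def ons_v0_def ons_smult_def del: mult_pCons_left mult_pCons_right)
  have main: "x \<in> LL \<Longrightarrow> f x = ons_pmult a0 x" for x
  proof (induction x rule: ons_lie_gen.induct)
    case (base x)
    then show ?case using G0 G1 G2 \<open>a0 = c2\<close> \<open>a0 = b1\<close>
      by (auto simp: ons_pmult_def ons_v0_def ons_v1_def ons_v2_def)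
  next
    case zero
    then show ?case using f0 by (simp add: ons_pmult_def ons_zero_def)
  next
    case (add x y)
    then show ?case using fadd pmult_add by metis
  next
    case (smult x c)
    then show ?case using sm pmult_smult by metis
  next
    case (br x y)
    then show ?case using fbr br_pmult by metis
  qed
  show ?thesis using main gen_all by blast
qed

lemma extract_q:
  assumes I: "ons_ideal I" and x: "x \<in> I" "x \<noteq> ons_zero"
  shows "\<exists>q. q \<noteq> 0 \<and> ((q::'a::field poly),0,0) \<in> I"
proof -
  have cl: "\<And>u y. y \<in> I \<Longrightarrow> ons_br u y \<in> I" using I unfolding ons_ideal_def by blast
  obtain a b c where X: "x = (a,b,c)" by (cases x) auto
  have "a \<noteq> 0 \<or> b \<noteq> 0 \<or> c \<noteq> 0" using x X by (auto simp: ons_zero_def)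
  moreover
  { assume "b \<noteq> 0"
    have "ons_br ons_v1 (ons_br ons_v0 x) = ([:-1,1:]*b,0,0)"
      using X by (simp add: ons_br_def ons_v0_def ons_v1_def)
    moreover have "ons_br ons_v1 (ons_br ons_v0 x) \<in> I" using cl x by blast
    ultimately have ?thesis using \<open>b \<noteq> 0\<close> by (metis mult_eq_0_iff pCons_eq_0_iff one_neq_zero) }
  moreover
  { assume "a \<noteq> 0"
    have "ons_br ons_v2 (ons_br ons_v0 (ons_br ons_v1 x)) = (- ([:0,1:]*([:-1,1:]*a)),0,0)"
      using X by (simp add: ons_br_def ons_v0_def ons_v1_def ons_v2_def)
    moreover have "ons_br ons_v2 (ons_br ons_v0 (ons_br ons_v1 x)) \<in> I" using cl x by blast
    ultimately have ?thesis using \<open>a \<noteq> 0\<close> by (metis mult_eq_0_iff neg_equal_0_iff_equal pCons_eq_0_iff one_neq_zero) }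
  moreover
  { assume "c \<noteq> 0"
    have "ons_br ons_v2 (ons_br ons_v2 (ons_br ons_v1 x)) = (- ([:0,1:]*c),0,0)"
      using X by (simp add: ons_br_def ons_v0_def ons_v1_def ons_v2_def)
    moreover have "ons_br ons_v2 (ons_br ons_v2 (ons_br ons_v1 x)) \<in> I" using cl x by blast
    ultimately have ?thesis using \<open>c \<noteq> 0\<close> by (metis mult_eq_0_iff neg_equal_0_iff_equal pCons_eq_0_iff one_neq_zero) }
  ultimately show ?thesis by blast
qed

lemma prime_ons: "ons_prime TYPE('a::field)"
  unfolding ons_prime_def
proof (intro allI impI)
  fix I J :: "'a ons set"
  assume I: "ons_ideal I" and J: "ons_ideal J" and I0: "I \<noteq> {ons_zero}" and J0: "J \<noteq> {ons_zero}"
  obtain x where x: "x \<in> I" "x \<noteq> ons_zero" using I I0 unfolding ons_ideal_def by blast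
  obtain y where y: "y \<in> J" "y \<noteq> ons_zero" using J J0 unfolding ons_ideal_def by blast
  obtain q where q: "q \<noteq> 0" "(q,0,0) \<in> I" using extract_q[OF I x] by blast
  obtain r where r: "r \<noteq> 0" "(r,0,0) \<in> J" using extract_q[OF J y] by blast
  have "ons_br ons_v1 (r,0,0) \<in> J" using J r unfolding ons_ideal_def by blast
  moreover have "ons_br ons_v1 (r,0,0) = (0,0,[:-1,1:]*r)" by (simp add: ons_br_def ons_v1_def)
  ultimately have rJ: "(0,0,[:-1,1:]*r) \<in> J" by simp
  have "ons_br (q,0,0) (0,0,[:-1,1:]*r) \<in> ons_ideal_br I J"
    unfolding ons_ideal_br_def using q rJ by (blast intro: ons_kspan.base)
  moreover have "ons_br (q,0,0) (0,0,[:-1,1:]*r) = (0, - ([:0,1:]*(q*([:-1,1:]*r))), 0)"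
    by (simp add: ons_br_def)
  moreover have "(0::'a poly, - ([:0,1:]*(q*([:-1,1:]*r))), 0::'a poly) \<noteq> ons_zero"
    using q r by (simp add: ons_zero_def del: mult_pCons_left mult_pCons_right)
  ultimately show "ons_ideal_br I J \<noteq> {ons_zero}" by force
qed

theorem lemma4p5:
  assumes "(2::'a::field) \<noteq> 0"
  shows "ons_lie_gen {ons_v0, ons_v1, ons_v2} = (UNIV :: 'a ons set) \<and>
         bij_betw (\<lambda>p::'a poly. ons_pmult p) UNIV ons_centroid \<and>
         ons_prime TYPE('a)"
proof (intro conjI)
  show "ons_lie_gen {ons_v0, ons_v1, ons_v2} = (UNIV :: 'a ons set)" by (rule gen_all)
  show "ons_prime TYPE('a)" by (rule prime_ons)
  show "bij_betw (\<lambda>p::'a poly. ons_pmult p) UNIV ons_centroid"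
  proof (rule bij_betw_imageI)
    show "inj_on (\<lambda>p::'a poly. ons_pmult p) UNIV"
    proof (rule inj_onI)
      fix p q :: "'a poly"
      assume "ons_pmult p = ons_pmult q"
      then have "ons_pmult p ons_v0 = ons_pmult q ons_v0" by simp
      then show "p = q" by (simp add: ons_pmult_def ons_v0_def)
    qed
    show "(\<lambda>p::'a poly. ons_pmult p) ` UNIV = ons_centroid"
      using pmult_cent cent_is_pmult by blast
  qed
qed

end
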